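(* Let $\Gamma$ be a finite simple graph with a linear order on $V(\Gamma)$. Let $n\ge1$ and $a,g,b\in G(\Gamma)$ such that $ag^nb$ is geodesic (i.e. $|ag^nb|=|a|+n|g|+|b|$) and $g$ is strongly non-split and SD-conical. Then $$\sigma(ag^nb)\equiv\sigma(a)\underbrace{\sigma(g)\cdots\sigma(g)}_{n-1}\sigma(gb).$$
   Context: $G(\Gamma)=\langle v\in V(\Gamma)\mid [v_i,v_j]=1 \text{ if } \{v_i,v_j\}\notin E(\Gamma)\rangle$. $|g|$ is word length; reduced word = shortest representative; $\mathrm{supp}(g)$ = set of generators $v$ with $v^{\pm1}$ in a reduced word for $g$; $\equiv$ is letterwise equality of words. $g_1,g_2$ disjointly commute if their supports are disjoint and every generator of one commutes with every generator of the other (i.e. they are non-adjacent in $\Gamma$). $g$ is non-split if $\mathrm{supp}(g)$ spans a connected subgraph; strongly non-split if non-split and no generator disjointly commutes with $g$. $S(g)$ = set of $v\in V(\Gamma)$ such that some reduced word for $g$ begins with $v^{\pm1}$. $g$ is conical with apex $v_0$ if $S(g)=\{v_0\}$; SD-conical if moreover $v<v_0$ implies $\{v,v_0\}\in E(\Gamma)$. A reduced word for $g$ is initially normal if it is empty or its first letter is $v^{\pm1}$ with $v$ the largest element of $S(g)$; normal if all its suffixes are initially normal; $\sigma(g)$ is the unique normal word representing $g$ (CGW-normal form). *)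

theory Defs
  imports Main
begin

(* Graph Gamma: finite vertex type 'v (class finite), linearly ordered (class linorder),
   simple graph given by a symmetric irreflexive edge relation E.
   G(Gamma) = < V | [u,v] = 1 whenever {u,v} is NOT an edge >.
   Letters: (v, True) = v, (v, False) = v^-1. Group elements are represented by words;
   two words represent the same element iff they are related by rel_eq E. *)

type_synonym 'v letter = "'v \<times> bool"

definition inv_letter :: "'v letter \<Rightarrow> 'v letter" where
  "inv_letter l = (fst l, \<not> snd l)"

inductive raag_step :: "('v \<Rightarrow> 'v \<Rightarrow> bool) \<Rightarrow> 'v letter list \<Rightarrow> 'v letter list \<Rightarrow> bool"
  for E where
  cancel: "raag_step E (xs @ [l, inv_letter l] @ ys) (xs @ ys)"
| swap: "u \<noteq> v \<Longrightarrow> \<not> E u v \<Longrightarrow>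
         raag_step E (xs @ [(u,s),(v,t)] @ ys) (xs @ [(v,t),(u,s)] @ ys)"

definition rel_eq :: "('v \<Rightarrow> 'v \<Rightarrow> bool) \<Rightarrow> 'v letter list \<Rightarrow> 'v letter list \<Rightarrow> bool" where
  "rel_eq E = equivclp (raag_step E)"

definition wlen :: "('v \<Rightarrow> 'v \<Rightarrow> bool) \<Rightarrow> 'v letter list \<Rightarrow> nat" where
  "wlen E w = (LEAST n. \<exists>u. rel_eq E u w \<and> length u = n)"

definition reduced :: "('v \<Rightarrow> 'v \<Rightarrow> bool) \<Rightarrow> 'v letter list \<Rightarrow> bool" where
  "reduced E w \<longleftrightarrow> length w = wlen E w"

definition supp :: "('v \<Rightarrow> 'v \<Rightarrow> bool) \<Rightarrow> 'v letter list \<Rightarrow> 'v set" where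
  "supp E w = {v. \<exists>u. rel_eq E u w \<and> reduced E u \<and> v \<in> fst ` set u}"

definition disj_commute :: "('v \<Rightarrow> 'v \<Rightarrow> bool) \<Rightarrow> 'v letter list \<Rightarrow> 'v letter list \<Rightarrow> bool" where
  "disj_commute E g1 g2 \<longleftrightarrow> supp E g1 \<inter> supp E g2 = {} \<and>
     (\<forall>x\<in>supp E g1. \<forall>y\<in>supp E g2. \<not> E x y)"

definition connected_sub :: "('v \<Rightarrow> 'v \<Rightarrow> bool) \<Rightarrow> 'v set \<Rightarrow> bool" where
  "connected_sub E S \<longleftrightarrow> (\<forall>x\<in>S. \<forall>y\<in>S. (\<lambda>a b. a \<in> S \<and> b \<in> S \<and> E a b)\<^sup>*\<^sup>* x y)"

definition non_split :: "('v \<Rightarrow> 'v \<Rightarrow> bool) \<Rightarrow> 'v letter list \<Rightarrow> bool" where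
  "non_split E g \<longleftrightarrow> connected_sub E (supp E g)"

definition strongly_non_split :: "('v \<Rightarrow> 'v \<Rightarrow> bool) \<Rightarrow> 'v letter list \<Rightarrow> bool" where
  "strongly_non_split E g \<longleftrightarrow> non_split E g \<and> (\<forall>v. \<not> disj_commute E [(v, True)] g)"

definition start_set :: "('v \<Rightarrow> 'v \<Rightarrow> bool) \<Rightarrow> 'v letter list \<Rightarrow> 'v set" where
  "start_set E w = {v. \<exists>u. rel_eq E u w \<and> reduced E u \<and> u \<noteq> [] \<and> fst (hd u) = v}"

definition conical :: "('v \<Rightarrow> 'v \<Rightarrow> bool) \<Rightarrow> 'v letter list \<Rightarrow> 'v \<Rightarrow> bool" where
  "conical E g v0 \<longleftrightarrow> start_set E g = {v0}"

definition SD_conical :: "('v \<Rightarrow> 'v \<Rightarrow> bool) \<Rightarrow> 'v::linorder letter list \<Rightarrow> 'v \<Rightarrow> bool" where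
  "SD_conical E g v0 \<longleftrightarrow> conical E g v0 \<and> (\<forall>v. v < v0 \<longrightarrow> E v v0)"

definition initially_normal :: "('v \<Rightarrow> 'v \<Rightarrow> bool) \<Rightarrow> 'v::{finite,linorder} letter list \<Rightarrow> bool" where
  "initially_normal E w \<longleftrightarrow> reduced E w \<and> (w = [] \<or> fst (hd w) = Max (start_set E w))"

definition normal :: "('v \<Rightarrow> 'v \<Rightarrow> bool) \<Rightarrow> 'v::{finite,linorder} letter list \<Rightarrow> bool" where
  "normal E w \<longleftrightarrow> (\<forall>k \<le> length w. initially_normal E (drop k w))"

definition sigma :: "('v \<Rightarrow> 'v \<Rightarrow> bool) \<Rightarrow> 'v::{finite,linorder} letter list \<Rightarrow> 'v letter list" where
  "sigma E w = (THE u. normal E u \<and> rel_eq E u w)"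

definition wpow :: "'a list \<Rightarrow> nat \<Rightarrow> 'a list" where
  "wpow w n = concat (replicate n w)"

end

theory Submission
  imports Defs
begin


definition cm :: "('v \<Rightarrow> 'v \<Rightarrow> bool) \<Rightarrow> 'v \<Rightarrow> 'v \<Rightarrow> bool" where
  "cm E x y \<longleftrightarrow> x \<noteq> y \<and> \<not> E x y \<and> \<not> E y x"

lemma cm_sym: "cm E x y \<Longrightarrow> cm E y x"
  by (auto simp: cm_def)

lemma cm_irrefl[simp]: "\<not> cm E x x"
  by (auto simp: cm_def)

definition swap1 :: "('v \<Rightarrow> 'v \<Rightarrow> bool) \<Rightarrow> 'v letter list \<Rightarrow> 'v letter list \<Rightarrow> bool" where
  "swap1 E w w' \<longleftrightarrow> (\<exists>xs a b ys. cm E (fst a) (fst b) \<and> w = xs @ [a,b] @ ys \<and> w' = xs @ [b,a] @ ys)"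

definition sweq :: "('v \<Rightarrow> 'v \<Rightarrow> bool) \<Rightarrow> 'v letter list \<Rightarrow> 'v letter list \<Rightarrow> bool" where
  "sweq E = (swap1 E)\<^sup>*\<^sup>*"

lemma swap1_sym: assumes "swap1 E w w'" shows "swap1 E w' w"
proof -
  obtain xs a b ys where h: "cm E (fst a) (fst b)" "w = xs @ [a,b] @ ys" "w' = xs @ [b,a] @ ys"
    using assms unfolding swap1_def by blast
  then show ?thesis unfolding swap1_def using cm_sym[OF h(1)] by blast
qed

lemma sweq_refl[simp]: "sweq E w w"
  by (simp add: sweq_def)

lemma sweq_trans: "sweq E u v \<Longrightarrow> sweq E v w \<Longrightarrow> sweq E u w"
  by (simp add: sweq_def)

lemma sweq_sym: "sweq E u v \<Longrightarrow> sweq E v u"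
  unfolding sweq_def
proof (induction rule: rtranclp_induct)
  case base
  then show ?case by simp
next
  case (step y z)
  then show ?case using swap1_sym by (metis converse_rtranclp_into_rtranclp)
qed

lemma swap1_cong: assumes "swap1 E u v" shows "swap1 E (x @ u @ y) (x @ v @ y)"
proof -
  obtain xs a b ys where h: "cm E (fst a) (fst b)" "u = xs @ [a,b] @ ys" "v = xs @ [b,a] @ ys"
    using assms unfolding swap1_def by blast
  show ?thesis unfolding swap1_def
    by (rule exI[of _ "x @ xs"], rule exI[of _ a], rule exI[of _ b], rule exI[of _ "ys @ y"]) (simp add: h)
qed

lemma sweq_cong: "sweq E u v \<Longrightarrow> sweq E (x @ u @ y) (x @ v @ y)"
  unfolding sweq_def
proof (induction rule: rtranclp_induct)
  case base
  then show ?case by simp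
next
  case (step y' z)
  then show ?case using swap1_cong by (metis rtranclp.rtrancl_into_rtrancl)
qed

lemma sweq_Cons: "sweq E u v \<Longrightarrow> sweq E (a # u) (a # v)"
  using sweq_cong[of E u v "[a]" "[]"] by simp

lemma sweq_app: "sweq E u u' \<Longrightarrow> sweq E v v' \<Longrightarrow> sweq E (u @ v) (u' @ v')"
  using sweq_cong[of E u u' "[]" v] sweq_cong[of E v v' u' "[]"] sweq_trans by fastforce

lemma swap1_length: "swap1 E u v \<Longrightarrow> length u = length v"
  unfolding swap1_def by auto

lemma swap1_set: "swap1 E u v \<Longrightarrow> set u = set v"
  unfolding swap1_def by auto

lemma sweq_length: "sweq E u v \<Longrightarrow> length u = length v"
  unfolding sweq_def by (induction rule: rtranclp_induct) (auto dest: swap1_length)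

lemma sweq_set: "sweq E u v \<Longrightarrow> set u = set v"
  unfolding sweq_def by (induction rule: rtranclp_induct) (auto dest: swap1_set)

lemma sweq_Nil: "sweq E [] v \<Longrightarrow> v = []"
  using sweq_length by fastforce

lemma sweq_swap: "cm E (fst a) (fst b) \<Longrightarrow> sweq E (a # b # z) (b # a # z)"
  unfolding sweq_def swap1_def
  by (rule r_into_rtranclp) (metis append.left_neutral append_Cons)

lemma sweq_move:
  "(\<forall>c\<in>set p. cm E (fst c) (fst m)) \<Longrightarrow> sweq E (p @ [m] @ q) (m # (p @ q))"
proof (induction p arbitrary: q rule: rev_induct)
  case Nil
  then show ?case by simp
next
  case (snoc c p)
  have "sweq E (p @ [c, m] @ q) (p @ [m, c] @ q)"
    using sweq_cong[OF sweq_swap[of E c m q], of p "[]"] snoc.prems by simp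
  moreover have "sweq E (p @ [m] @ (c # q)) (m # (p @ c # q))"
    using snoc by simp
  ultimately show ?case by (auto intro: sweq_trans)
qed


lemma swap1_head_step:
  assumes "swap1 E w w2" "w = p @ [m] @ q" "\<forall>c\<in>set p. cm E (fst c) (fst m)"
  shows "\<exists>p' q'. w2 = p' @ [m] @ q' \<and> (\<forall>c\<in>set p'. cm E (fst c) (fst m)) \<and> sweq E (p @ q) (p' @ q')"
proof -
  obtain xs a b ys where ab: "cm E (fst a) (fst b)" "w = xs @ [a,b] @ ys" "w2 = xs @ [b,a] @ ys"
    using assms(1) unfolding swap1_def by blast
  have eq: "xs @ ([a,b] @ ys) = p @ ([m] @ q)" using ab assms by simp
  then obtain us where "(xs = p @ us \<and> us @ [a,b] @ ys = [m] @ q) \<or> (xs @ us = p \<and> [a,b] @ ys = us @ [m] @ q)"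
    unfolding append_eq_append_conv2 by blast
  then show ?thesis
  proof
    assume h: "xs = p @ us \<and> us @ [a,b] @ ys = [m] @ q"
    show ?thesis
    proof (cases us)
      case Nil
      then have am: "a = m" "q = b # ys" "xs = p" using h by auto
      have "w2 = (p @ [b]) @ [m] @ ys" using ab(3) am by simp
      moreover have "\<forall>c\<in>set (p @ [b]). cm E (fst c) (fst m)" using assms(3) ab(1) am cm_sym by auto
      moreover have "p @ q = (p @ [b]) @ ys" using am by simp
      ultimately show ?thesis by (intro exI[of _ "p @ [b]"] exI[of _ ys] conjI) simp_all
    next
      case (Cons u us')
      then have "u = m" "q = us' @ [a,b] @ ys" using h by auto
      moreover have "sweq E (p @ us' @ [a,b] @ ys) (p @ us' @ [b,a] @ ys)"
        using sweq_cong[OF sweq_swap[OF ab(1)], of "p @ us'" "[]"] by simp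
      moreover have "w2 = p @ [m] @ (us' @ [b,a] @ ys)" using ab(3) h Cons \<open>u = m\<close> by simp
      ultimately show ?thesis using assms(3) by (intro exI[of _ p] exI[of _ "us' @ [b,a] @ ys"] conjI) simp_all
    qed
  next
    assume h: "xs @ us = p \<and> [a,b] @ ys = us @ [m] @ q"
    show ?thesis
    proof (cases us)
      case Nil
      then have am: "a = m" "q = b # ys" "xs = p" using h by auto
      have "w2 = (p @ [b]) @ [m] @ ys" using ab(3) am by simp
      moreover have "\<forall>c\<in>set (p @ [b]). cm E (fst c) (fst m)" using assms(3) ab(1) am cm_sym by auto
      moreover have "p @ q = (p @ [b]) @ ys" using am by simp
      ultimately show ?thesis by (intro exI[of _ "p @ [b]"] exI[of _ ys] conjI) simp_all
    next
      case (Cons u us')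
      show ?thesis
      proof (cases us')
        case Nil
        then have "u = a" "b = m" "ys = q" using h Cons by auto
        then have "w2 = xs @ [m] @ (a # q)" "p = xs @ [a]" using ab(3) h Cons Nil \<open>us = u # us'\<close> by auto
        moreover have "\<forall>c\<in>set xs. cm E (fst c) (fst m)" using assms(3) calculation(2) by auto
        ultimately show ?thesis by (intro exI[of _ xs] exI[of _ "a # q"]) simp
      next
        case (Cons u2 us'')
        then have "u = a" "u2 = b" "ys = us'' @ [m] @ q" using h \<open>us = u # us'\<close> by auto
        moreover have "sweq E (xs @ [a,b] @ us'' @ q) (xs @ [b,a] @ us'' @ q)"
          using sweq_cong[OF sweq_swap[OF ab(1)], of xs "[]"] by simp
        moreover have "w2 = (xs @ [b,a] @ us'') @ [m] @ q" "p = xs @ [a,b] @ us''"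
          using ab(3) h Cons \<open>us = u # us'\<close> \<open>u = a\<close> \<open>u2 = b\<close> \<open>ys = _\<close> by auto
        ultimately have hh: "sweq E (xs @ [a,b] @ us'' @ q) (xs @ [b,a] @ us'' @ q)"
           "w2 = (xs @ [b,a] @ us'') @ [m] @ q" "p = xs @ [a,b] @ us''" by auto
        have "\<forall>c\<in>set (xs @ [b,a] @ us''). cm E (fst c) (fst m)" using assms(3) hh(3) by auto
        then show ?thesis using hh by (intro exI[of _ "xs @ [b,a] @ us''"] exI[of _ q]) simp
      qed
    qed
  qed
qed

lemma sweq_head:
  assumes "sweq E (m # w') w"
  shows "\<exists>p q. w = p @ [m] @ q \<and> (\<forall>c\<in>set p. cm E (fst c) (fst m)) \<and> sweq E w' (p @ q)"
  using assms unfolding sweq_def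
proof (induction rule: rtranclp_induct)
  case base
  then show ?case by (intro exI[of _ "[]"] exI[of _ w']) auto
next
  case (step y z)
  then obtain p q where pq: "y = p @ [m] @ q" "\<forall>c\<in>set p. cm E (fst c) (fst m)" "(swap1 E)\<^sup>*\<^sup>* w' (p @ q)"
    by (auto simp: sweq_def)
  obtain p' q' where pq': "z = p' @ [m] @ q'" "\<forall>c\<in>set p'. cm E (fst c) (fst m)" "sweq E (p @ q) (p' @ q')"
    using swap1_head_step[OF step(2) pq(1,2)] by blast
  have "(swap1 E)\<^sup>*\<^sup>* w' (p' @ q')" using pq(3) pq'(3) unfolding sweq_def by simp
  then show ?case using pq' by blast
qed

lemma pos_unique:
  assumes "p1 @ [m] @ q1 = p2 @ [m] @ q2" "\<forall>c\<in>set p1. cm E (fst c) (fst m)"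
    "\<forall>c\<in>set p2. cm E (fst c) (fst m)"
  shows "p1 = p2 \<and> q1 = q2"
proof -
  have "p1 @ ([m] @ q1) = p2 @ ([m] @ q2)" using assms by simp
  then obtain us where "(p1 = p2 @ us \<and> us @ [m] @ q1 = [m] @ q2) \<or> (p1 @ us = p2 \<and> [m] @ q1 = us @ [m] @ q2)"
    unfolding append_eq_append_conv2 by blast
  then show ?thesis
  proof
    assume h: "p1 = p2 @ us \<and> us @ [m] @ q1 = [m] @ q2"
    show ?thesis
    proof (cases us)
      case Nil then show ?thesis using h by simp
    next
      case (Cons u us') then have "m \<in> set p1" using h by auto
      then show ?thesis using assms(2) by fastforce
    qed
  next
    assume h: "p1 @ us = p2 \<and> [m] @ q1 = us @ [m] @ q2"
    show ?thesis
    proof (cases us)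
      case Nil then show ?thesis using h by simp
    next
      case (Cons u us') then have "m \<in> set p2" using h by auto
      then show ?thesis using assms(3) by fastforce
    qed
  qed
qed

lemma sweq_cancel_left:
  assumes "sweq E w (m # w1)" "sweq E w (m # w2)"
  shows "sweq E w1 w2"
proof -
  obtain p1 q1 where 1: "w = p1 @ [m] @ q1" "\<forall>c\<in>set p1. cm E (fst c) (fst m)" "sweq E w1 (p1 @ q1)"
    using sweq_head[OF sweq_sym[OF assms(1)]] by blast
  obtain p2 q2 where 2: "w = p2 @ [m] @ q2" "\<forall>c\<in>set p2. cm E (fst c) (fst m)" "sweq E w2 (p2 @ q2)"
    using sweq_head[OF sweq_sym[OF assms(2)]] by blast
  have "p1 @ [m] @ q1 = p2 @ [m] @ q2" using 1(1) 2(1) by simp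
  then have "p1 = p2 \<and> q1 = q2" using pos_unique 1(2) 2(2) by blast
  then have "sweq E w1 (p2 @ q2)" using 1(3) by simp
  then show ?thesis using sweq_trans sweq_sym[OF 2(3)] by blast
qed

lemma levi_aux:
  assumes "w = p1 @ [m] @ q1" "\<forall>c\<in>set p1. cm E (fst c) (fst m)" "sweq E w1 (p1 @ q1)"
    "w = p2 @ [m'] @ q2" "\<forall>c\<in>set p2. cm E (fst c) (fst m')" "sweq E w2 (p2 @ q2)"
    "length p1 < length p2"
  shows "cm E (fst m) (fst m') \<and> (\<exists>w3. sweq E w1 (m' # w3) \<and> sweq E w2 (m # w3))"
proof -
  have "p1 @ ([m] @ q1) = p2 @ ([m'] @ q2)" using assms by simp
  then obtain us where "(p1 = p2 @ us \<and> us @ [m] @ q1 = [m'] @ q2) \<or> (p1 @ us = p2 \<and> [m] @ q1 = us @ [m'] @ q2)"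
    unfolding append_eq_append_conv2 by blast
  moreover have "\<not> (p1 = p2 @ us)" using assms(7) by auto
  ultimately have h: "p1 @ us = p2" "[m] @ q1 = us @ [m'] @ q2" by auto
  then obtain r where r: "us = m # r" "q1 = r @ [m'] @ q2" using assms(7)
    by (cases us) auto
  have p2: "p2 = p1 @ [m] @ r" using h r by simp
  have c1: "cm E (fst m) (fst m')" using assms(5) p2 by auto
  have a1: "\<forall>c\<in>set (p1 @ r). cm E (fst c) (fst m')" using assms(5) p2 by auto
  have "sweq E (p1 @ q1) (m' # (p1 @ r @ q2))"
    using sweq_move[OF a1, of q2] r by simp
  then have s1: "sweq E w1 (m' # (p1 @ r @ q2))" using assms(3) sweq_trans by blast
  have "sweq E (p2 @ q2) (m # (p1 @ r @ q2))"
    using sweq_move[OF assms(2), of "r @ q2"] p2 by simp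
  then have s2: "sweq E w2 (m # (p1 @ r @ q2))" using assms(6) sweq_trans by blast
  show ?thesis using c1 s1 s2 by blast
qed

lemma sweq_levi:
  assumes "sweq E w (m # w1)" "sweq E w (m' # w2)" "m \<noteq> m'"
  shows "cm E (fst m) (fst m') \<and> (\<exists>w3. sweq E w1 (m' # w3) \<and> sweq E w2 (m # w3))"
proof -
  obtain p1 q1 where h1: "w = p1 @ [m] @ q1" "\<forall>c\<in>set p1. cm E (fst c) (fst m)" "sweq E w1 (p1 @ q1)"
    using sweq_head[OF sweq_sym[OF assms(1)]] by blast
  obtain p2 q2 where h2: "w = p2 @ [m'] @ q2" "\<forall>c\<in>set p2. cm E (fst c) (fst m')" "sweq E w2 (p2 @ q2)"
    using sweq_head[OF sweq_sym[OF assms(2)]] by blast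
  have "length p1 \<noteq> length p2"
  proof
    assume "length p1 = length p2"
    moreover have "p1 @ (m # q1) = p2 @ (m' # q2)" using h1(1) h2(1) by simp
    ultimately have "p1 = p2 \<and> m # q1 = m' # q2" using append_eq_append_conv[of p1 p2 "m # q1" "m' # q2"] by blast
    then have "m = m'" by simp
    then show False using assms(3) by simp
  qed
  then consider "length p1 < length p2" | "length p2 < length p1" by linarith
  then show ?thesis
  proof cases
    case 1
    show ?thesis by (rule levi_aux[OF h1 h2 1])
  next
    case 2
    have "cm E (fst m') (fst m) \<and> (\<exists>w3. sweq E w2 (m # w3) \<and> sweq E w1 (m' # w3))"
      by (rule levi_aux[OF h2 h1 2])
    then show ?thesis using cm_sym[of E "fst m'" "fst m"] by blast
  qed
qed



lemma inv_inv[simp]: "inv_letter (inv_letter l) = l"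
  by (simp add: inv_letter_def)

lemma fst_inv[simp]: "fst (inv_letter l) = fst l"
  by (simp add: inv_letter_def)

lemma inv_neq[simp]: "inv_letter l \<noteq> l" "l \<noteq> inv_letter l"
  by (auto simp: inv_letter_def prod_eq_iff)

definition red :: "('v \<Rightarrow> 'v \<Rightarrow> bool) \<Rightarrow> 'v letter list \<Rightarrow> bool" where
  "red E w \<longleftrightarrow> \<not> (\<exists>x l y. sweq E w (x @ [l, inv_letter l] @ y))"

lemma red_sweq: assumes "sweq E u w" "red E u" shows "red E w"
  using assms unfolding red_def using sweq_trans by blast

lemma red_Nil[simp]: "red E []"
  unfolding red_def using sweq_Nil by fastforce

lemma red_app: assumes "red E (x @ y)" shows "red E x" "red E y"
proof -
  show "red E x" unfolding red_def
  proof
    assume "\<exists>x1 l y1. sweq E x (x1 @ [l, inv_letter l] @ y1)"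
    then obtain x1 l y1 where "sweq E x (x1 @ [l, inv_letter l] @ y1)" by blast
    then have "sweq E (x @ y) (x1 @ [l, inv_letter l] @ (y1 @ y))"
      using sweq_cong[of E x _ "[]" y] by fastforce
    then show False using assms unfolding red_def by blast
  qed
  show "red E y" unfolding red_def
  proof
    assume "\<exists>x1 l y1. sweq E y (x1 @ [l, inv_letter l] @ y1)"
    then obtain x1 l y1 where "sweq E y (x1 @ [l, inv_letter l] @ y1)" by blast
    then have "sweq E (x @ y) ((x @ x1) @ [l, inv_letter l] @ y1)"
      using sweq_cong[of E y _ x "[]"] by fastforce
    then show False using assms unfolding red_def by blast
  qed
qed

lemma red_Cons_iff:
  "red E (l # w) \<longleftrightarrow> red E w \<and> \<not> (\<exists>z. sweq E w (inv_letter l # z))"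
proof
  assume r: "red E (l # w)"
  have "red E w" using red_app(2)[of E "[l]" w] r by simp
  moreover have "\<not> (\<exists>z. sweq E w (inv_letter l # z))"
  proof
    assume "\<exists>z. sweq E w (inv_letter l # z)"
    then obtain z where "sweq E w (inv_letter l # z)" by blast
    then have "sweq E (l # w) ([] @ [l, inv_letter l] @ z)" using sweq_Cons by fastforce
    then show False using r unfolding red_def by blast
  qed
  ultimately show "red E w \<and> \<not> (\<exists>z. sweq E w (inv_letter l # z))" by blast
next
  assume h: "red E w \<and> \<not> (\<exists>z. sweq E w (inv_letter l # z))"
  show "red E (l # w)" unfolding red_def
  proof
    assume "\<exists>x m y. sweq E (l # w) (x @ [m, inv_letter m] @ y)"
    then obtain x m y where t: "sweq E (l # w) (x @ [m, inv_letter m] @ y)" by blast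
    obtain p q where pq: "x @ [m, inv_letter m] @ y = p @ [l] @ q" "\<forall>c\<in>set p. cm E (fst c) (fst l)"
      "sweq E w (p @ q)"
      using sweq_head[OF t] by blast
    have nr: "\<not> sweq E w (x' @ [m, inv_letter m] @ y')" for x' y'
      using h unfolding red_def by blast
    have "p @ ([l] @ q) = x @ ([m, inv_letter m] @ y)" using pq(1) by simp
    then obtain us where "(p = x @ us \<and> us @ [l] @ q = [m, inv_letter m] @ y) \<or> (p @ us = x \<and> [l] @ q = us @ [m, inv_letter m] @ y)"
      unfolding append_eq_append_conv2 by blast
    then show False
    proof
      assume a: "p = x @ us \<and> us @ [l] @ q = [m, inv_letter m] @ y"
      show False
      proof (cases us)
        case Nil
        then have "l = m" "q = inv_letter m # y" "p = x" using a by auto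
        then have "sweq E w (inv_letter l # (p @ y))"
          using sweq_move[of p E "inv_letter l" y] pq(2,3) sweq_trans by fastforce
        then show False using h by blast
      next
        case (Cons u us')
        show False
        proof (cases us')
          case Nil
          then have "u = m" "l = inv_letter m" "p = x @ [m]" using a Cons by auto
          then show False using pq(2) by simp
        next
          case (Cons u2 us'')
          then have "u = m" "u2 = inv_letter m" "y = us'' @ [l] @ q" "p = x @ [m, inv_letter m] @ us''"
            using a \<open>us = u # us'\<close> by auto
          then have "p @ q = x @ [m, inv_letter m] @ (us'' @ q)" by simp
          then show False using pq(3) nr by metis
        qed
      qed
    next
      assume a: "p @ us = x \<and> [l] @ q = us @ [m, inv_letter m] @ y"
      show False
      proof (cases us)
        case Nil
        then have "l = m" "q = inv_letter m # y" "p = x" using a by auto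
        then have "sweq E w (inv_letter l # (p @ y))"
          using sweq_move[of p E "inv_letter l" y] pq(2,3) sweq_trans by fastforce
        then show False using h by blast
      next
        case (Cons u us')
        then have "q = us' @ [m, inv_letter m] @ y" "x = p @ u # us'" using a by auto
        then have "p @ q = (p @ us') @ [m, inv_letter m] @ y" by simp
        then show False using pq(3) nr by metis
      qed
    qed
  qed
qed




definition rho :: "('v \<Rightarrow> 'v \<Rightarrow> bool) \<Rightarrow> 'v letter \<Rightarrow> 'v letter list \<Rightarrow> 'v letter list" where
  "rho E l w = (if \<exists>z. sweq E w (inv_letter l # z) then (SOME z. sweq E w (inv_letter l # z)) else l # w)"

lemma rho_cancel: assumes "sweq E w (inv_letter l # z)" shows "sweq E (rho E l w) z"
proof -
  have "sweq E w (inv_letter l # (SOME z. sweq E w (inv_letter l # z)))"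
    using someI[of "\<lambda>z. sweq E w (inv_letter l # z)"] assms by blast
  then have "sweq E (SOME z. sweq E w (inv_letter l # z)) z"
    using sweq_cancel_left assms by blast
  then show ?thesis unfolding rho_def using assms by auto
qed

lemma rho_nocancel: assumes "\<not> (\<exists>z. sweq E w (inv_letter l # z))" shows "rho E l w = l # w"
  using assms unfolding rho_def by auto

lemma rho_cong: assumes "sweq E w w2" shows "sweq E (rho E l w) (rho E l w2)"
proof (cases "\<exists>z. sweq E w (inv_letter l # z)")
  case True
  then obtain z where z: "sweq E w (inv_letter l # z)" by blast
  then have z2: "sweq E w2 (inv_letter l # z)" using assms sweq_sym sweq_trans by blast
  show ?thesis using rho_cancel[OF z] rho_cancel[OF z2] sweq_sym sweq_trans by blast
next
  case False
  then have "\<not> (\<exists>z. sweq E w2 (inv_letter l # z))" using assms sweq_trans by blast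
  then show ?thesis using False rho_nocancel[of E w l] rho_nocancel[of E w2 l] sweq_Cons[OF assms] by simp
qed

lemma rho_red: assumes "red E w" shows "red E (rho E l w)"
proof (cases "\<exists>z. sweq E w (inv_letter l # z)")
  case True
  then obtain z where z: "sweq E w (inv_letter l # z)" by blast
  have "red E (inv_letter l # z)" using red_sweq[OF z assms] .
  then have "red E z" using red_Cons_iff by blast
  then show ?thesis using red_sweq[OF sweq_sym[OF rho_cancel[OF z]]] by blast
next
  case False
  then show ?thesis using rho_nocancel[OF False] assms red_Cons_iff by metis
qed

lemma rho_inv: assumes "red E w" shows "sweq E (rho E (inv_letter l) (rho E l w)) w"
proof (cases "\<exists>z. sweq E w (inv_letter l # z)")
  case True
  then obtain z where z: "sweq E w (inv_letter l # z)" by blast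
  have r1: "sweq E (rho E l w) z" using rho_cancel[OF z] .
  have "red E (inv_letter l # z)" using red_sweq[OF z assms] .
  then have nz: "\<not> (\<exists>y. sweq E z (l # y))" using red_Cons_iff[of E "inv_letter l" z] by simp
  have "\<not> (\<exists>y. sweq E (rho E l w) (l # y))" using nz r1 sweq_trans sweq_sym by blast
  then have "rho E (inv_letter l) (rho E l w) = inv_letter l # rho E l w"
    using rho_nocancel[of E "rho E l w" "inv_letter l"] by simp
  moreover have "sweq E (inv_letter l # rho E l w) w" using sweq_Cons[OF r1] z sweq_sym sweq_trans by blast
  ultimately show ?thesis by simp
next
  case False
  then have "rho E l w = l # w" by (rule rho_nocancel)
  moreover have "sweq E (rho E (inv_letter l) (l # w)) w"
    using rho_cancel[of E "l # w" "inv_letter l" w] by simp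
  ultimately show ?thesis by simp
qed

lemma rho_comm: assumes c: "cm E (fst l1) (fst l2)"
  shows "sweq E (rho E l1 (rho E l2 w)) (rho E l2 (rho E l1 w))"
proof -
  have ne: "inv_letter l1 \<noteq> inv_letter l2" "l1 \<noteq> l2" using c by (metis cm_def fst_inv)+
  have c': "cm E (fst (inv_letter l2)) (fst (inv_letter l1))" using cm_sym[OF c] by simp
  have mixed: "sweq E (rho E l1 (rho E l2 w)) (rho E l2 (rho E l1 w))"
    if ca: "\<exists>z. sweq E w (inv_letter l2 # z)" and nb: "\<not> (\<exists>z. sweq E w (inv_letter l1 # z))"
      and cc: "cm E (fst (inv_letter l2)) (fst (inv_letter l1))" "cm E (fst l1) (fst l2)"
    for l1 l2
  proof -
    obtain z2 where z2: "sweq E w (inv_letter l2 # z2)" using ca by blast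
    have r2: "sweq E (rho E l2 w) z2" by (rule rho_cancel[OF z2])
    have "\<not> (\<exists>y. sweq E z2 (inv_letter l1 # y))"
    proof
      assume "\<exists>y. sweq E z2 (inv_letter l1 # y)"
      then obtain y where "sweq E z2 (inv_letter l1 # y)" by blast
      then have "sweq E w (inv_letter l2 # inv_letter l1 # y)" using z2 sweq_Cons sweq_trans by blast
      moreover have "sweq E (inv_letter l2 # inv_letter l1 # y) (inv_letter l1 # inv_letter l2 # y)"
        using sweq_swap[OF cc(1)] by simp
      ultimately show False using nb sweq_trans by blast
    qed
    then have "\<not> (\<exists>y. sweq E (rho E l2 w) (inv_letter l1 # y))" using r2 sweq_trans sweq_sym by blast
    then have e1: "rho E l1 (rho E l2 w) = l1 # rho E l2 w" by (rule rho_nocancel)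
    have e2: "rho E l1 w = l1 # w" using nb by (rule rho_nocancel)
    have "sweq E (l1 # w) (l1 # inv_letter l2 # z2)" using sweq_Cons[OF z2] .
    moreover have "sweq E (l1 # inv_letter l2 # z2) (inv_letter l2 # l1 # z2)"
      using sweq_swap[of E l1 "inv_letter l2"] cc(2) by simp
    ultimately have "sweq E (l1 # w) (inv_letter l2 # l1 # z2)" using sweq_trans by blast
    then have "sweq E (rho E l2 (l1 # w)) (l1 # z2)" by (rule rho_cancel)
    moreover have "sweq E (l1 # rho E l2 w) (l1 # z2)" using sweq_Cons[OF r2] .
    ultimately show ?thesis using e1 e2 sweq_sym sweq_trans by metis
  qed
  consider (A) "\<exists>z. sweq E w (inv_letter l1 # z)" "\<exists>z. sweq E w (inv_letter l2 # z)"
    | (B) "\<not> (\<exists>z. sweq E w (inv_letter l1 # z))" "\<exists>z. sweq E w (inv_letter l2 # z)"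
    | (C) "\<exists>z. sweq E w (inv_letter l1 # z)" "\<not> (\<exists>z. sweq E w (inv_letter l2 # z))"
    | (D) "\<not> (\<exists>z. sweq E w (inv_letter l1 # z))" "\<not> (\<exists>z. sweq E w (inv_letter l2 # z))"
    by blast
  then show ?thesis
  proof cases
    case A
    then obtain z1 z2 where z1: "sweq E w (inv_letter l1 # z1)" and z2: "sweq E w (inv_letter l2 # z2)" by blast
    obtain w3 where w3: "sweq E z1 (inv_letter l2 # w3)" "sweq E z2 (inv_letter l1 # w3)"
      using sweq_levi[OF z1 z2 ne(1)] by blast
    have "sweq E (rho E l1 w) (inv_letter l2 # w3)" using rho_cancel[OF z1] w3(1) sweq_trans by blast
    then have a: "sweq E (rho E l2 (rho E l1 w)) w3" by (rule rho_cancel)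
    have "sweq E (rho E l2 w) (inv_letter l1 # w3)" using rho_cancel[OF z2] w3(2) sweq_trans by blast
    then have b: "sweq E (rho E l1 (rho E l2 w)) w3" by (rule rho_cancel)
    show ?thesis using a b sweq_sym sweq_trans by blast
  next
    case B
    show ?thesis by (rule mixed[OF B(2) B(1) c' c])
  next
    case C
    have "sweq E (rho E l2 (rho E l1 w)) (rho E l1 (rho E l2 w))"
      by (rule mixed[OF C(1) C(2) cm_sym[OF c'] cm_sym[OF c]])
    then show ?thesis by (rule sweq_sym)
  next
    case D
    have e1: "rho E l1 w = l1 # w" "rho E l2 w = l2 # w" using D by (auto intro: rho_nocancel)
    have n1: "\<not> (\<exists>z. sweq E (l2 # w) (inv_letter l1 # z))"
    proof
      assume "\<exists>z. sweq E (l2 # w) (inv_letter l1 # z)"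
      then obtain z where "sweq E (l2 # w) (inv_letter l1 # z)" by blast
      then obtain w3 where "sweq E w (inv_letter l1 # w3)"
        using sweq_levi[of E "l2 # w" l2 w "inv_letter l1" z] by (metis sweq_refl fst_inv cm_def c)
      then show False using D by blast
    qed
    have n2: "\<not> (\<exists>z. sweq E (l1 # w) (inv_letter l2 # z))"
    proof
      assume "\<exists>z. sweq E (l1 # w) (inv_letter l2 # z)"
      then obtain z where "sweq E (l1 # w) (inv_letter l2 # z)" by blast
      then obtain w3 where "sweq E w (inv_letter l2 # w3)"
        using sweq_levi[of E "l1 # w" l1 w "inv_letter l2" z] by (metis sweq_refl fst_inv cm_def c)
      then show False using D by blast
    qed
    have "rho E l1 (rho E l2 w) = l1 # l2 # w" using e1 rho_nocancel[OF n1] by simp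
    moreover have "rho E l2 (rho E l1 w) = l2 # l1 # w" using e1 rho_nocancel[OF n2] by simp
    ultimately show ?thesis using sweq_swap[OF c] by simp
  qed
qed



fun act :: "('v \<Rightarrow> 'v \<Rightarrow> bool) \<Rightarrow> 'v letter list \<Rightarrow> 'v letter list \<Rightarrow> 'v letter list" where
  "act E [] w = w"
| "act E (l # u) w = rho E l (act E u w)"

lemma act_append: "act E (xs @ ys) w = act E xs (act E ys w)"
  by (induction xs) auto

lemma act_cong: "sweq E w w2 \<Longrightarrow> sweq E (act E u w) (act E u w2)"
  by (induction u) (auto intro: rho_cong)

lemma act_red: "red E w \<Longrightarrow> red E (act E u w)"
  by (induction u) (auto intro: rho_red)

lemma act_step:
  assumes "symp E" "raag_step E u u2" "red E w"
  shows "sweq E (act E u w) (act E u2 w)"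
  using assms(2)
proof cases
  case (cancel xs l ys)
  have "sweq E (rho E (inv_letter (inv_letter l)) (rho E (inv_letter l) (act E ys w))) (act E ys w)"
    by (rule rho_inv[OF act_red[OF assms(3)]])
  then have "sweq E (act E xs (rho E l (rho E (inv_letter l) (act E ys w)))) (act E xs (act E ys w))"
    using act_cong by simp
  then show ?thesis using cancel by (simp add: act_append)
next
  case (swap u' v' xs s t ys)
  have c: "cm E u' v'" using swap assms(1) unfolding cm_def by (metis sympD)
  have "sweq E (rho E (u', s) (rho E (v', t) (act E ys w))) (rho E (v', t) (rho E (u', s) (act E ys w)))"
    using rho_comm[of E "(u', s)" "(v', t)"] c by simp
  then have "sweq E (act E xs (rho E (u', s) (rho E (v', t) (act E ys w)))) (act E xs (rho E (v', t) (rho E (u', s) (act E ys w))))"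
    using act_cong by blast
  then show ?thesis using swap by (simp add: act_append)
qed

lemma act_releq:
  assumes "symp E" "rel_eq E u u2"
  shows "sweq E (act E u []) (act E u2 [])"
  using assms(2) unfolding rel_eq_def
proof (induction rule: equivclp_induct)
  case base
  then show ?case by simp
next
  case (step y z)
  then show ?case using act_step[OF assms(1) _ red_Nil] sweq_sym sweq_trans by metis
qed

lemma act_self: "red E w \<Longrightarrow> sweq E (act E w []) w"
proof (induction w)
  case Nil
  then show ?case by simp
next
  case (Cons l w)
  then have r: "red E w" "\<not> (\<exists>z. sweq E w (inv_letter l # z))" using red_Cons_iff by blast+
  have "sweq E (rho E l (act E w [])) (rho E l w)" using rho_cong Cons.IH r(1) by blast
  then show ?case using rho_nocancel[OF r(2)] by simp
qed

theorem word_problem: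
  assumes "symp E" "red E u" "red E w" "rel_eq E u w"
  shows "sweq E u w"
proof -
  have "sweq E (act E u []) (act E w [])" by (rule act_releq[OF assms(1,4)])
  then show ?thesis using act_self[OF assms(2)] act_self[OF assms(3)] sweq_sym sweq_trans by metis
qed

lemma rel_eq_refl[simp]: "rel_eq E u u"
  by (simp add: rel_eq_def)

lemma rel_eq_sym: "rel_eq E u w \<Longrightarrow> rel_eq E w u"
  unfolding rel_eq_def by (rule equivclp_sym)

lemma rel_eq_trans: "rel_eq E u v \<Longrightarrow> rel_eq E v w \<Longrightarrow> rel_eq E u w"
  unfolding rel_eq_def by (rule equivclp_trans)

lemma raag_step_cong: assumes "raag_step E u v" shows "raag_step E (x @ u @ y) (x @ v @ y)"
  using assms
proof cases
  case (cancel xs l ys)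
  then show ?thesis using raag_step.cancel[of E "x @ xs" l "ys @ y"] by simp
next
  case (swap a b xs s t ys)
  then show ?thesis using raag_step.swap[where xs="x @ xs" and ys="ys @ y" and E=E and u=a and v=b and s=s and t=t] by simp
qed

lemma rel_eq_cong: assumes "rel_eq E u v" shows "rel_eq E (x @ u @ y) (x @ v @ y)"
  using assms unfolding rel_eq_def
proof (induction rule: equivclp_induct)
  case base
  then show ?case by simp
next
  case (step a b)
  then show ?case using raag_step_cong equivclp_into_equivclp by metis
qed

lemma rel_eq_app: "rel_eq E u u' \<Longrightarrow> rel_eq E v v' \<Longrightarrow> rel_eq E (u @ v) (u' @ v')"
  using rel_eq_cong[of E u u' "[]" v] rel_eq_cong[of E v v' u' "[]"] rel_eq_trans by fastforce

lemma sweq_releq: assumes "symp E" "sweq E u w" shows "rel_eq E u w"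
  using assms(2) unfolding sweq_def
proof (induction rule: rtranclp_induct)
  case base
  then show ?case by simp
next
  case (step y z)
  obtain xs a b ys where h: "cm E (fst a) (fst b)" "y = xs @ [a,b] @ ys" "z = xs @ [b,a] @ ys"
    using step(2) unfolding swap1_def by blast
  have "raag_step E y z" using raag_step.swap[where E=E and u="fst a" and v="fst b" and xs=xs and s="snd a" and t="snd b" and ys=ys] h
    unfolding cm_def by simp
  then show ?case using step(3) rel_eq_trans unfolding rel_eq_def by blast
qed

lemma cancel_releq: "rel_eq E (x @ [l, inv_letter l] @ y) (x @ y)"
  unfolding rel_eq_def by (rule r_into_equivclp) (rule raag_step.cancel)

lemma not_red_shorter:
  assumes "symp E" "\<not> red E w"
  shows "\<exists>w'. rel_eq E w w' \<and> length w' + 2 = length w"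
proof -
  obtain x l y where h: "sweq E w (x @ [l, inv_letter l] @ y)" using assms(2) unfolding red_def by blast
  have "rel_eq E w (x @ y)" using sweq_releq[OF assms(1) h] cancel_releq rel_eq_trans by blast
  moreover have "length w = length (x @ [l, inv_letter l] @ y)" using sweq_length[OF h] .
  ultimately show ?thesis by (intro exI[of _ "x @ y"]) simp
qed

lemma red_exists:
  assumes "symp E"
  shows "\<exists>r. red E r \<and> rel_eq E w r \<and> length r \<le> length w"
proof (induction "length w" arbitrary: w rule: less_induct)
  case less
  show ?case
  proof (cases "red E w")
    case True
    then show ?thesis by (intro exI[of _ w]) simp
  next
    case False
    obtain w' where w': "rel_eq E w w'" "length w' + 2 = length w"
      using not_red_shorter[OF assms False] by blast
    obtain r where "red E r" "rel_eq E w' r" "length r \<le> length w'"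
      using less[of w'] w' by auto
    then show ?thesis using w' rel_eq_trans by (intro exI[of _ r]) auto
  qed
qed

lemma wlen_le: "rel_eq E u w \<Longrightarrow> wlen E w \<le> length u"
  unfolding wlen_def by (rule Least_le) blast

lemma wlen_red:
  assumes "symp E" "red E r" "rel_eq E r w"
  shows "wlen E w = length r"
  unfolding wlen_def
proof (rule Least_equality)
  show "\<exists>u. rel_eq E u w \<and> length u = length r" using assms(3) by blast
next
  fix n assume "\<exists>u. rel_eq E u w \<and> length u = n"
  then obtain u where u: "rel_eq E u w" "length u = n" by blast
  obtain r' where r': "red E r'" "rel_eq E u r'" "length r' \<le> length u" using red_exists[OF assms(1)] by blast
  have "rel_eq E r' r" using r'(2) u(1) assms(3) rel_eq_sym rel_eq_trans by metis
  then have "sweq E r' r" using word_problem[OF assms(1) r'(1) assms(2)] by blast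
  then show "length r \<le> n" using sweq_length r'(3) u(2) by fastforce
qed

lemma reduced_iff: assumes "symp E" shows "reduced E w \<longleftrightarrow> red E w"
proof
  assume r: "reduced E w"
  show "red E w"
  proof (rule ccontr)
    assume "\<not> red E w"
    then obtain w' where "rel_eq E w w'" "length w' + 2 = length w" using not_red_shorter[OF assms] by blast
    then have "wlen E w < length w" using wlen_le[of E w' w] rel_eq_sym by fastforce
    then show False using r unfolding reduced_def by simp
  qed
next
  assume "red E w"
  then show "reduced E w" unfolding reduced_def using wlen_red[OF assms, of w w] by simp
qed

lemma wlen_cong: assumes "rel_eq E u w" shows "wlen E u = wlen E w"
proof -
  have "(\<lambda>n. \<exists>x. rel_eq E x u \<and> length x = n) = (\<lambda>n. \<exists>x. rel_eq E x w \<and> length x = n)"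
    using assms rel_eq_sym rel_eq_trans by metis
  then show ?thesis unfolding wlen_def by simp
qed

lemma start_set_cong: assumes "rel_eq E u w" shows "start_set E u = start_set E w"
  unfolding start_set_def using assms rel_eq_sym rel_eq_trans by metis

lemma start_set_red:
  assumes "symp E" "red E w"
  shows "start_set E w = {v. \<exists>m z. sweq E w (m # z) \<and> fst m = v}"
proof (intro set_eqI iffI)
  fix v assume "v \<in> start_set E w"
  then obtain u where u: "rel_eq E u w" "reduced E u" "u \<noteq> []" "fst (hd u) = v"
    unfolding start_set_def by blast
  have "sweq E w u" using word_problem[OF assms(1) assms(2) _ rel_eq_sym[OF u(1)]] u(2) reduced_iff[OF assms(1)] by blast
  then have "sweq E w (hd u # tl u)" using u(3) by simp
  then show "v \<in> {v. \<exists>m z. sweq E w (m # z) \<and> fst m = v}" using u(4) by blast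
next
  fix v assume "v \<in> {v. \<exists>m z. sweq E w (m # z) \<and> fst m = v}"
  then obtain m z where mz: "sweq E w (m # z)" "fst m = v" by blast
  have "red E (m # z)" using red_sweq[OF mz(1) assms(2)] .
  moreover have "rel_eq E (m # z) w" using sweq_releq[OF assms(1) sweq_sym[OF mz(1)]] .
  ultimately show "v \<in> start_set E w" unfolding start_set_def using mz(2) reduced_iff[OF assms(1)] by fastforce
qed

lemma supp_red:
  assumes "symp E" "red E w"
  shows "supp E w = fst ` set w"
proof (intro set_eqI iffI)
  fix v assume "v \<in> supp E w"
  then obtain u where u: "rel_eq E u w" "reduced E u" "v \<in> fst ` set u"
    unfolding supp_def by blast
  have "sweq E u w" using word_problem[OF assms(1) _ assms(2) u(1)] u(2) reduced_iff[OF assms(1)] by blast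
  then show "v \<in> fst ` set w" using sweq_set u(3) by metis
next
  fix v assume "v \<in> fst ` set w"
  moreover have "reduced E w" using assms reduced_iff by blast
  ultimately show "v \<in> supp E w" unfolding supp_def using rel_eq_refl by blast
qed



lemma normal_Nil[simp]: "normal E []"
  unfolding normal_def initially_normal_def reduced_def wlen_def
  by (auto intro!: Least_equality[symmetric])

lemma normal_Cons: "normal E (m # u) \<longleftrightarrow> initially_normal E (m # u) \<and> normal E u"
proof
  assume h: "normal E (m # u)"
  have "initially_normal E (drop 0 (m # u))" using h unfolding normal_def by blast
  moreover have "initially_normal E (drop k u)" if "k \<le> length u" for k
    using h that unfolding normal_def by (metis drop_Suc_Cons Suc_le_mono length_Cons)
  ultimately show "initially_normal E (m # u) \<and> normal E u" unfolding normal_def by simp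
next
  assume h: "initially_normal E (m # u) \<and> normal E u"
  show "normal E (m # u)" unfolding normal_def
  proof (intro allI impI)
    fix k assume "k \<le> length (m # u)"
    then show "initially_normal E (drop k (m # u))"
      using h unfolding normal_def by (cases k) auto
  qed
qed

lemma normal_red: assumes "symp E" "normal E u" shows "red E u"
proof -
  have "initially_normal E (drop 0 u)" using assms(2) unfolding normal_def by blast
  then show ?thesis using reduced_iff[OF assms(1)] unfolding initially_normal_def by simp
qed

lemma normal_unique:
  assumes "symp E" "normal E u" "normal E w" "rel_eq E u w"
  shows "u = w"
  using assms(2-4)
proof (induction u arbitrary: w)
  case Nil
  have "sweq E [] w" using word_problem[OF assms(1) red_Nil normal_red[OF assms(1) Nil(2)] Nil(3)] .
  then show ?case using sweq_Nil by metis
next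
  case (Cons m u')
  have sw: "sweq E (m # u') w" using word_problem[OF assms(1) normal_red[OF assms(1) Cons(2)] normal_red[OF assms(1) Cons(3)] Cons(4)] .
  then have "w \<noteq> []" using sweq_length by fastforce
  then obtain m' w' where w: "w = m' # w'" by (cases w) auto
  have in1: "initially_normal E (m # u')" "normal E u'" using Cons(2) normal_Cons by blast+
  have in2: "initially_normal E (m' # w')" "normal E w'" using Cons(3) w normal_Cons by blast+
  have "start_set E (m # u') = start_set E (m' # w')" using start_set_cong Cons(4) w by blast
  then have fm: "fst m = fst m'" using in1(1) in2(1) unfolding initially_normal_def by simp
  have mm: "m = m'"
  proof (rule ccontr)
    assume "m \<noteq> m'"
    then have "cm E (fst m) (fst m')" using sweq_levi[OF sweq_refl sw[unfolded w]] by blast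
    then show False using fm by simp
  qed
  have "sweq E u' w'" using sweq_cancel_left[OF sweq_refl sw[unfolded w mm]] by simp
  then have "rel_eq E u' w'" using sweq_releq[OF assms(1)] by blast
  then have "u' = w'" using Cons.IH in1(2) in2(2) by blast
  then show ?case using w mm by simp
qed

lemma normal_exists_red:
  assumes "symp E" "red E r"
  shows "\<exists>u. normal E u \<and> rel_eq E u r"
  using assms(2)
proof (induction "length r" arbitrary: r rule: less_induct)
  case less
  show ?case
  proof (cases r)
    case Nil
    then show ?thesis by (intro exI[of _ "[]"]) simp
  next
    case (Cons r0 rs)
    let ?S = "start_set E r"
    have S: "?S = {v. \<exists>m z. sweq E r (m # z) \<and> fst m = v}" using start_set_red[OF assms(1) less(2)] .
    have "sweq E r (r0 # rs)" using Cons by simp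
    then have "fst r0 \<in> ?S" unfolding S by blast
    moreover have "finite ?S" by simp
    ultimately have "Max ?S \<in> ?S" using Max_in[of ?S] by blast
    then obtain m z where mz: "sweq E r (m # z)" "fst m = Max ?S" unfolding S by blast
    have rz: "red E (m # z)" using red_sweq[OF mz(1) less(2)] .
    then have "red E z" using red_Cons_iff by blast
    moreover have "length z < length r" using sweq_length[OF mz(1)] by simp
    ultimately obtain nz where nz: "normal E nz" "rel_eq E nz z" using less(1) by blast
    have rel1: "rel_eq E (m # nz) (m # z)" using rel_eq_cong[OF nz(2), of "[m]" "[]"] by simp
    have rel2: "rel_eq E (m # nz) r"
      using rel1 sweq_releq[OF assms(1) sweq_sym[OF mz(1)]] rel_eq_trans by blast
    have lnz: "length nz = length z"
      using word_problem[OF assms(1) normal_red[OF assms(1) nz(1)] \<open>red E z\<close> nz(2)] sweq_length by blast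
    have "wlen E (m # nz) = length (m # z)"
      using wlen_cong[OF rel1] wlen_red[OF assms(1) rz rel_eq_refl] by simp
    then have "reduced E (m # nz)" unfolding reduced_def using lnz by simp
    moreover have "start_set E (m # nz) = ?S" using start_set_cong[OF rel2] .
    ultimately have "initially_normal E (m # nz)" unfolding initially_normal_def using mz(2) by simp
    then have "normal E (m # nz)" using nz(1) normal_Cons by blast
    then show ?thesis using rel2 by blast
  qed
qed

lemma sigma_eq:
  assumes "symp E" "normal E u" "rel_eq E u w"
  shows "sigma E w = u"
  unfolding sigma_def
proof (rule the_equality)
  show "normal E u \<and> rel_eq E u w" using assms by blast
next
  fix u' assume "normal E u' \<and> rel_eq E u' w"
  then show "u' = u" using normal_unique[OF assms(1), of u' u] assms(2,3) rel_eq_sym rel_eq_trans by blast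
qed

lemma sigma_props:
  assumes "symp E"
  shows "normal E (sigma E w) \<and> rel_eq E (sigma E w) w"
proof -
  obtain r where r: "red E r" "rel_eq E w r" using red_exists[OF assms] by blast
  obtain u where u: "normal E u" "rel_eq E u r" using normal_exists_red[OF assms r(1)] by blast
  have "rel_eq E u w" using u(2) r(2) rel_eq_sym rel_eq_trans by blast
  then show ?thesis using sigma_eq[OF assms u(1)] u(1) by simp
qed

lemma key_lemma:
  assumes "symp E" "\<forall>v. v < v0 \<longrightarrow> E v v0" "normal E x" "normal E y" "red E (x @ y)"
    "start_set E y \<subseteq> {v0}"
  shows "normal E (x @ y)"
  using assms(3,5)
proof (induction x)
  case Nil
  then show ?case using assms(4) by simp
next
  case (Cons m x')
  have nx: "initially_normal E (m # x')" "normal E x'" using Cons(2) normal_Cons by blast+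
  have r1: "red E (x' @ y)" using red_app(2)[of E "[m]" "x' @ y"] Cons(3) by simp
  have ih: "normal E (x' @ y)" using Cons.IH[OF nx(2) r1] .
  have rmx: "red E (m # x')" using red_app(1)[of E "m # x'" y] Cons(3) by simp
  have ry: "red E y" using red_app(2)[of E "m # x'" y] Cons(3) by simp
  have Smx: "start_set E (m # x') = {v. \<exists>c z. sweq E (m # x') (c # z) \<and> fst c = v}"
    using start_set_red[OF assms(1) rmx] .
  have Sy: "start_set E y = {v. \<exists>c z. sweq E y (c # z) \<and> fst c = v}"
    using start_set_red[OF assms(1) ry] .
  have fm: "fst m = Max (start_set E (m # x'))" using nx(1) unfolding initially_normal_def by simp
  let ?T = "start_set E (m # (x' @ y))"
  have T: "?T = {v. \<exists>c z. sweq E (m # (x' @ y)) (c # z) \<and> fst c = v}"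
    using start_set_red[OF assms(1)] Cons(3) by simp
  have "sweq E (m # (x' @ y)) (m # (x' @ y))" by simp
  then have inT: "fst m \<in> ?T" unfolding T by blast
  have leT: "v \<le> fst m" if vT: "v \<in> ?T" for v
  proof -
    obtain c z where cz: "sweq E (m # (x' @ y)) (c # z)" "fst c = v" using vT unfolding T by blast
    obtain p q where pq: "(m # x') @ y = p @ [c] @ q" "\<forall>c'\<in>set p. cm E (fst c') (fst c)"
      using sweq_head[OF sweq_sym[OF cz(1)]] by auto
    have in_y: "v \<le> fst m" if "m \<in> set p" "y = p2 @ [c] @ q" "set p2 \<subseteq> set p" for p2
    proof -
      have "sweq E y (c # (p2 @ q))" using sweq_move[of p2 E c q] pq(2) that by auto
      then have "fst c \<in> start_set E y" unfolding Sy by blast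
      then have "fst c = v0" using assms(6) by blast
      moreover have "cm E (fst m) (fst c)" using pq(2) that(1) by blast
      ultimately have "\<not> fst m < v0" using assms(2) unfolding cm_def by blast
      then show ?thesis using cz(2) \<open>fst c = v0\<close> by simp
    qed
    have "(m # x') @ y = p @ ([c] @ q)" using pq(1) by simp
    then obtain us where "((m # x') = p @ us \<and> us @ y = [c] @ q) \<or> ((m # x') @ us = p \<and> y = us @ [c] @ q)"
      unfolding append_eq_append_conv2 by blast
    then show ?thesis
    proof
      assume h: "(m # x') = p @ us \<and> us @ y = [c] @ q"
      show ?thesis
      proof (cases us)
        case Nil
        then have "m # x' = p" "y = [] @ [c] @ q" using h by auto
        then show ?thesis using in_y[of "[]"] by auto
      next
        case (Cons u us')
        then have "m # x' = p @ [c] @ us'" using h by simp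
        then have "sweq E (m # x') (c # (p @ us'))" using sweq_move[of p E c us'] pq(2) by simp
        then have "v \<in> start_set E (m # x')" unfolding Smx using cz(2) by blast
        then show ?thesis using fm Max_ge[of "start_set E (m # x')" v] by simp
      qed
    next
      assume h: "(m # x') @ us = p \<and> y = us @ [c] @ q"
      then have "m \<in> set p" "y = us @ [c] @ q" "set us \<subseteq> set p" by auto
      then show ?thesis using in_y[of us] by blast
    qed
  qed
  have "Max ?T = fst m" by (rule Max_eqI) (use inT leT in auto)
  moreover have "reduced E (m # (x' @ y))" using Cons(3) reduced_iff[OF assms(1)] by simp
  ultimately have "initially_normal E (m # (x' @ y))" unfolding initially_normal_def by simp
  then have "normal E (m # (x' @ y))" using ih normal_Cons[of E m "x' @ y"] by blast
  then show ?case by simp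
qed



lemma wpow_0[simp]: "wpow w 0 = []" by (simp add: wpow_def)
lemma wpow_Suc: "wpow w (Suc k) = w @ wpow w k" by (simp add: wpow_def)
lemma wpow_add: "wpow w (i + j) = wpow w i @ wpow w j" by (simp add: wpow_def replicate_add)
lemma length_wpow: "length (wpow w k) = k * length w" by (induction k) (auto simp: wpow_Suc)
lemma rel_eq_wpow: "rel_eq E u w \<Longrightarrow> rel_eq E (wpow u k) (wpow w k)"
  by (induction k) (auto simp: wpow_Suc intro: rel_eq_app)

lemma supp_cong: assumes "rel_eq E u w" shows "supp E u = supp E w"
  unfolding supp_def using assms rel_eq_sym rel_eq_trans by metis

lemma start_prefix:
  assumes "symp E" "red E (x @ z)" "start_set E x \<subseteq> {v0}" "\<forall>v. \<not> (\<forall>c\<in>set x. cm E (fst c) v)"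
  shows "start_set E (x @ z) \<subseteq> {v0}"
proof
  fix v assume vT: "v \<in> start_set E (x @ z)"
  have rx: "red E x" using red_app(1)[OF assms(2)] .
  obtain c w where cw: "sweq E (x @ z) (c # w)" "fst c = v"
    using vT start_set_red[OF assms(1,2)] by blast
  obtain p q where pq: "x @ z = p @ [c] @ q" "\<forall>c'\<in>set p. cm E (fst c') (fst c)"
    using sweq_head[OF sweq_sym[OF cw(1)]] by auto
  have "x @ z = p @ ([c] @ q)" using pq(1) by simp
  then obtain us where "(x = p @ us \<and> us @ z = [c] @ q) \<or> (x @ us = p \<and> z = us @ [c] @ q)"
    unfolding append_eq_append_conv2 by blast
  then show "v \<in> {v0}"
  proof
    assume h: "x = p @ us \<and> us @ z = [c] @ q"
    show ?thesis
    proof (cases us)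
      case Nil
      then have "set x \<subseteq> set p" using h by auto
      then show ?thesis using assms(4) pq(2) by blast
    next
      case (Cons u us')
      then have "x = p @ [c] @ us'" using h by simp
      then have "sweq E x (c # (p @ us'))" using sweq_move[of p E c us'] pq(2) by simp
      then have "v \<in> start_set E x" using start_set_red[OF assms(1) rx] cw(2) by blast
      then show ?thesis using assms(3) by blast
    qed
  next
    assume h: "x @ us = p \<and> z = us @ [c] @ q"
    then have "set x \<subseteq> set p" by auto
    then show ?thesis using assms(4) pq(2) by blast
  qed
qed

lemma sns_lemma:
  assumes "symp E" "strongly_non_split E g" "red E gs" "rel_eq E gs g"
  shows "\<forall>v. \<not> (\<forall>c\<in>set gs. cm E (fst c) v)"
proof (intro allI notI)
  fix v assume h: "\<forall>c\<in>set gs. cm E (fst c) v"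
  have r1: "red E [(v, True)]" using red_Cons_iff[of E "(v, True)" "[]"] sweq_Nil by fastforce
  have s1: "supp E [(v, True)] = {v}" using supp_red[OF assms(1) r1] by simp
  have s2: "supp E g = fst ` set gs" using supp_cong[OF assms(4)] supp_red[OF assms(1,3)] by simp
  have "disj_commute E [(v, True)] g" unfolding disj_commute_def s1 s2
    using h unfolding cm_def by auto
  then show False using assms(2) unfolding strongly_non_split_def by blast
qed

theorem proposition2p10:
  fixes E :: "'v::{finite,linorder} \<Rightarrow> 'v \<Rightarrow> bool"
    and a g b :: "'v letter list" and n :: nat
  assumes "symp E" and "irreflp E"
    and "n \<ge> 1"
    and "wlen E (a @ wpow g n @ b) = wlen E a + n * wlen E g + wlen E b"
    and "strongly_non_split E g"
    and "\<exists>v0. SD_conical E g v0"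
  shows "sigma E (a @ wpow g n @ b) = sigma E a @ wpow (sigma E g) (n - 1) @ sigma E (g @ b)"
proof -
  note sy = assms(1)
  obtain v0 where sd: "SD_conical E g v0" using assms(6) by blast
  have Sg: "start_set E g = {v0}" and SD: "\<forall>v. v < v0 \<longrightarrow> E v v0"
    using sd unfolding SD_conical_def conical_def by auto
  define A where "A = sigma E a"
  define Gs where "Gs = sigma E g"
  define B where "B = sigma E b"
  define C where "C = sigma E (g @ b)"
  define X where "X = a @ wpow g n @ b"
  define Y where "Y = A @ wpow Gs (n - 1) @ C"
  have nA: "normal E A" "rel_eq E A a" using sigma_props[OF sy] A_def by auto
  have nG: "normal E Gs" "rel_eq E Gs g" using sigma_props[OF sy] Gs_def by auto
  have nB: "normal E B" "rel_eq E B b" using sigma_props[OF sy] B_def by auto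
  have nC: "normal E C" "rel_eq E C (g @ b)" using sigma_props[OF sy] C_def by auto
  have rA: "red E A" using normal_red[OF sy nA(1)] .
  have rG: "red E Gs" using normal_red[OF sy nG(1)] .
  have rB: "red E B" using normal_red[OF sy nB(1)] .
  have rC: "red E C" using normal_red[OF sy nC(1)] .
  have lA: "length A = wlen E a" using wlen_red[OF sy rA nA(2)] by simp
  have lG: "length Gs = wlen E g" using wlen_red[OF sy rG nG(2)] by simp
  have lB: "length B = wlen E b" using wlen_red[OF sy rB nB(2)] by simp
  have lC: "length C = wlen E (g @ b)" using wlen_red[OF sy rC nC(2)] by simp
  have relGB: "rel_eq E (Gs @ B) (g @ b)" using rel_eq_app[OF nG(2) nB(2)] .
  have wgb: "wlen E (g @ b) \<le> wlen E g + wlen E b" using wlen_le[OF relGB] lG lB by simp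
  have n1: "n = Suc (n - 1)" using assms(3) by simp
  have Xeq: "X = a @ wpow g (n - 1) @ (g @ b)"
    unfolding X_def using wpow_add[of g "n - 1" 1] n1 by (simp add: wpow_def)
  have relYX: "rel_eq E Y X" unfolding Y_def Xeq
    using rel_eq_app[OF nA(2) rel_eq_app[OF rel_eq_wpow[OF nG(2)] nC(2)]] .
  have lY: "length Y = wlen E a + (n - 1) * wlen E g + wlen E (g @ b)"
    unfolding Y_def using lA lG lC by (simp add: length_wpow)
  have "wlen E X \<le> length Y" using wlen_le[OF relYX] .
  moreover have "wlen E X = wlen E a + n * wlen E g + wlen E b" using assms(4) X_def by simp
  moreover have "n * wlen E g = (n - 1) * wlen E g + wlen E g" using n1
    by (metis add.commute mult_Suc)
  ultimately have eqs: "length Y = wlen E X" "wlen E (g @ b) = wlen E g + wlen E b"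
    using lY wgb by linarith+
  have "wlen E Y = wlen E X" using wlen_cong[OF relYX] .
  then have rY: "red E Y" using eqs(1) reduced_iff[OF sy, of Y] unfolding reduced_def by simp
  have "wlen E (Gs @ B) = length (Gs @ B)" using wlen_cong[OF relGB] eqs(2) lG lB by simp
  then have rGB: "red E (Gs @ B)" using reduced_iff[OF sy, of "Gs @ B"] unfolding reduced_def by simp
  have SG: "start_set E Gs = {v0}" using start_set_cong[OF nG(2)] Sg by simp
  have sns: "\<forall>v. \<not> (\<forall>c\<in>set Gs. cm E (fst c) v)" using sns_lemma[OF sy assms(5) rG nG(2)] .
  have relC: "rel_eq E C (Gs @ B)" using nC(2) relGB rel_eq_sym rel_eq_trans by blast
  have SC: "start_set E C \<subseteq> {v0}"
    using start_set_cong[OF relC] start_prefix[OF sy rGB, of v0] SG sns by simp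
  have redk: "red E (wpow Gs k @ C)" if "k \<le> n - 1" for k
  proof -
    have "Y = (A @ wpow Gs (n - 1 - k)) @ (wpow Gs k @ C)"
    proof -
      have "n - 1 - k + k = n - 1" using that by simp
      then show ?thesis unfolding Y_def using wpow_add[of Gs "n - 1 - k" k] by simp
    qed
    then show ?thesis using red_app(2) rY by metis
  qed
  have Sk: "start_set E (wpow Gs k @ C) \<subseteq> {v0}" if "k \<le> n - 1" for k
  proof (cases k)
    case 0
    then show ?thesis using SC by simp
  next
    case (Suc k')
    then have "red E (Gs @ (wpow Gs k' @ C))" using redk[OF that] by (simp add: wpow_Suc)
    then have "start_set E (Gs @ (wpow Gs k' @ C)) \<subseteq> {v0}"
      using start_prefix[OF sy _ _ sns] SG by simp
    then show ?thesis using Suc by (simp add: wpow_Suc)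
  qed
  have Nk: "normal E (wpow Gs k @ C)" if "k \<le> n - 1" for k
    using that
  proof (induction k)
    case 0
    then show ?case using nC(1) by simp
  next
    case (Suc k)
    have "normal E (Gs @ (wpow Gs k @ C))"
      using key_lemma[OF sy SD nG(1) Suc.IH] Suc.prems redk[OF Suc.prems] Sk[of k]
      by (simp add: wpow_Suc)
    then show ?case by (simp add: wpow_Suc)
  qed
  have "normal E Y" unfolding Y_def
    using key_lemma[OF sy SD nA(1) Nk[of "n - 1"] _ Sk[of "n - 1"]] rY Y_def by simp
  then have "sigma E X = Y" using sigma_eq[OF sy _ relYX] by blast
  then show ?thesis unfolding X_def Y_def A_def Gs_def C_def .
qed


end
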